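(* In the setting of the context, let $1\le i<j<k\le m$ be integers and $p',q,r$ integers such that $s_i^{p'}s_j^{q}s_k^{r}=e$ in $G_m$. Then $p'=q=r=0$.
   Context: $H$ is a finitely presented group with finite generating set $T$, containing a free subgroup $F$ of rank $p$ with free basis $\{d_1,\dots,d_p\}\subset T$ (standing assumption: $\mathrm{Dist}_F^H$ admits an exponentially bounded sequence of palindromic certificates in $F$). $F_x,F_y,F_z$ are free of rank $p$ with bases $\{x_i\},\{y_i\},\{z_i\}$. $G_1=[H\ast_{\langle d_i=x_iy_i^{-1}\rangle}(F_x\times F_y\times F_z)]\times\langle s_1\rangle$; $G_2=\langle G_1,s_2\mid s_2^{-1}(x_iz_i)s_2=y_iz_i,\ 1\le i\le p\rangle$; $G_l=\langle G_{l-1},s_l\mid s_l^{-1}s_1s_l=s_{l-1}\rangle$ for $l\ge3$. *)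

theory Defs
  imports Main
begin

text \<open>A word over an alphabet 'a is a list of letters with a sign (True = the letter, False = its inverse).\<close>
type_synonym 'a word = "('a \<times> bool) list"

definition inv_word :: "'a word \<Rightarrow> 'a word" where
  "inv_word w = rev (map (\<lambda>(a, b). (a, \<not> b)) w)"

definition map_word :: "('a \<Rightarrow> 'b) \<Rightarrow> 'a word \<Rightarrow> 'b word" where
  "map_word f w = map (\<lambda>(a, b). (f a, b)) w"

fun reduced :: "'a word \<Rightarrow> bool" where
  "reduced [] = True"
| "reduced [x] = True"
| "reduced ((a, b) # (c, d) # w) = (\<not> (a = c \<and> b \<noteq> d) \<and> reduced ((c, d) # w))"

text \<open>Equality of words in the group presented by all letters of 'a and relators R:
  the congruence generated by free cancellation and insertion/deletion of relators.\<close>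
inductive pres_eq :: "'a word set \<Rightarrow> 'a word \<Rightarrow> 'a word \<Rightarrow> bool" for R where
  refl: "pres_eq R w w"
| sym: "pres_eq R u v \<Longrightarrow> pres_eq R v u"
| trans: "pres_eq R u v \<Longrightarrow> pres_eq R v w \<Longrightarrow> pres_eq R u w"
| cancel: "pres_eq R (u @ [(a, b), (a, \<not> b)] @ v) (u @ v)"
| relator: "r \<in> R \<Longrightarrow> pres_eq R (u @ r @ v) (u @ v)"

definition eqrel :: "'a word \<Rightarrow> 'a word \<Rightarrow> 'a word" where
  "eqrel u v = u @ inv_word v"

definition commrel :: "'a \<Rightarrow> 'a \<Rightarrow> 'a word" where
  "commrel a b = [(a, True), (b, True), (a, False), (b, False)]"

definition wpow :: "'a \<Rightarrow> int \<Rightarrow> 'a word" where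
  "wpow a n = (if n \<ge> 0 then replicate (nat n) (a, True) else replicate (nat (- n)) (a, False))"

datatype 't gen = Hg 't | Xg nat | Yg nat | Zg nat | Sg nat

text \<open>Relators of G_m, given the relators RH of H (on the finite generating type 't),
  the basis d_1..d_p of F.  Indices of x_i, y_i, z_i range over 1..p, of s_l over 1..m.\<close>
definition G_rels :: "'t word set \<Rightarrow> (nat \<Rightarrow> 't) \<Rightarrow> nat \<Rightarrow> nat \<Rightarrow> 't gen word set" where
  "G_rels RH d p m =
     map_word Hg ` RH
   \<union> {commrel (Xg i) (Yg j) | i j. i \<in> {1..p} \<and> j \<in> {1..p}}
   \<union> {commrel (Xg i) (Zg j) | i j. i \<in> {1..p} \<and> j \<in> {1..p}}
   \<union> {commrel (Yg i) (Zg j) | i j. i \<in> {1..p} \<and> j \<in> {1..p}}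
   \<union> {eqrel [(Hg (d i), True)] [(Xg i, True), (Yg i, False)] | i. i \<in> {1..p}}
   \<union> {commrel (Sg 1) (Hg t) | t. True}
   \<union> {commrel (Sg 1) g | g i. i \<in> {1..p} \<and> g \<in> {Xg i, Yg i, Zg i}}
   \<union> {eqrel [(Sg 2, False), (Xg i, True), (Zg i, True), (Sg 2, True)] [(Yg i, True), (Zg i, True)]
       | i. 2 \<le> m \<and> i \<in> {1..p}}
   \<union> {eqrel [(Sg l, False), (Sg 1, True), (Sg l, True)] [(Sg (l - 1), True)] | l. 3 \<le> l \<and> l \<le> m}"

end

theory Submission
  imports Defs
begin

datatype m2 = M int int int int

fun mmul :: "m2 \<Rightarrow> m2 \<Rightarrow> m2" where
  "mmul (M a b c d) (M e f g h) = M (a*e + b*g) (a*f + b*h) (c*e + d*g) (c*f + d*h)"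

fun minv :: "m2 \<Rightarrow> m2" where
  "minv (M a b c d) = M d (-b) (-c) a"

fun mdet :: "m2 \<Rightarrow> int" where
  "mdet (M a b c d) = a*d - b*c"

definition mI :: m2 where "mI = M 1 0 0 1"

lemma mmul_assoc: "mmul (mmul x y) z = mmul x (mmul y z)"
  by (cases x; cases y; cases z) (simp add: algebra_simps)

lemma mmul_I1[simp]: "mmul mI x = x" by (cases x) (simp add: mI_def)
lemma mmul_I2[simp]: "mmul x mI = x" by (cases x) (simp add: mI_def)
lemma minv_r: "mdet x = 1 \<Longrightarrow> mmul x (minv x) = mI"
  by (cases x) (simp add: mI_def algebra_simps)
lemma minv_l: "mdet x = 1 \<Longrightarrow> mmul (minv x) x = mI"
  by (cases x) (simp add: mI_def algebra_simps)

definition upow :: "int \<Rightarrow> int \<Rightarrow> int \<Rightarrow> m2" where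
  "upow x y n = M (1 - n*x*y) (n*x^2) (-n*y^2) (1 + n*x*y)"

lemma upow_det: "mdet (upow x y n) = 1"
  by (simp add: upow_def algebra_simps power2_eq_square)

lemma upow_add: "mmul (upow x y n) (upow x y k) = upow x y (n + k)"
  by (simp add: upow_def algebra_simps power2_eq_square)

lemma upow_minv: "minv (upow x y n) = upow x y (-n)"
  by (simp add: upow_def)

lemma upow0: "upow x y 0 = mI" by (simp add: upow_def mI_def)

lemma two_dir:
  assumes "upow x2 y2 q = upow x3 y3 s" and "x2*y3 - y2*x3 \<noteq> 0"
  shows "q = 0 \<and> s = 0"
proof -
  have e: "q*x2^2 = s*x3^2" "q*y2^2 = s*y3^2" "q*x2*y2 = s*x3*y3"
    using assms(1) by (simp_all add: upow_def)
  have "q*(x2*y3 - y2*x3)^2 = 0" using e by algebra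
  then have q: "q = 0" using assms(2) by simp
  have "s*(x2*y3 - y2*x3)^2 = 0" using e by algebra
  then have "s = 0" using assms(2) by simp
  with q show ?thesis by simp
qed

lemma trace_prod:
  assumes "mmul (upow x1 y1 p) (upow x2 y2 q) = upow x3 y3 s"
  shows "p*q*(x1*y2 - y1*x2)^2 = 0"
proof -
  from assms have "(1 - p*x1*y1)*(1 - q*x2*y2) + (p*x1^2)*(-q*y2^2) = 1 - s*x3*y3"
     "(-p*y1^2)*(q*x2^2) + (1 + p*x1*y1)*(1 + q*x2*y2) = 1 + s*x3*y3"
    by (simp_all add: upow_def)
  then show ?thesis by algebra
qed
lemma three_dir:
  assumes "mmul (mmul (upow x1 y1 p) (upow x2 y2 q)) (upow x3 y3 r) = mI"
    and "x1*y2 - y1*x2 \<noteq> 0" "x1*y3 - y1*x3 \<noteq> 0" "x2*y3 - y2*x3 \<noteq> 0"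
  shows "p = 0 \<and> q = 0 \<and> r = 0"
proof -
  have "mmul (mmul (mmul (upow x1 y1 p) (upow x2 y2 q)) (upow x3 y3 r)) (upow x3 y3 (-r))
        = upow x3 y3 (-r)" using assms(1) by simp
  then have h: "mmul (upow x1 y1 p) (upow x2 y2 q) = upow x3 y3 (-r)"
    by (simp add: mmul_assoc upow_add upow0)
  from trace_prod[OF h] assms(2) have "p = 0 \<or> q = 0" by simp
  then show ?thesis
  proof
    assume p: "p = 0"
    with h have "upow x2 y2 q = upow x3 y3 (-r)" by (simp add: upow0)
    then show ?thesis using two_dir[OF _ assms(4)] p by fastforce
  next
    assume q: "q = 0"
    with h have "upow x1 y1 p = upow x3 y3 (-r)" by (simp add: upow0)
    then show ?thesis using two_dir[OF _ assms(3)] q by fastforce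
  qed
qed

lemma two_dir':
  assumes "mmul (upow x1 y1 p) (upow x2 y2 q) = mI"
    and "x1*y2 - y1*x2 \<noteq> 0"
  shows "p = 0 \<and> q = 0"
proof -
  have "mmul (mmul (upow x1 y1 p) (upow x2 y2 q)) (upow x2 y2 (-q)) = upow x2 y2 (-q)"
    using assms(1) by simp
  then have "upow x1 y1 p = upow x2 y2 (-q)" by (simp add: mmul_assoc upow_add upow0)
  with two_dir[OF this assms(2)] show ?thesis by simp
qed


definition lev :: "('a \<Rightarrow> m2) \<Rightarrow> 'a \<times> bool \<Rightarrow> m2" where
  "lev f x = (if snd x then f (fst x) else minv (f (fst x)))"

definition ev :: "('a \<Rightarrow> m2) \<Rightarrow> 'a word \<Rightarrow> m2" where
  "ev f w = foldr (\<lambda>x acc. mmul (lev f x) acc) w mI"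

lemma ev_Nil[simp]: "ev f [] = mI" by (simp add: ev_def)
lemma ev_Cons[simp]: "ev f (x # w) = mmul (lev f x) (ev f w)" by (simp add: ev_def)
lemma ev_append[simp]: "ev f (u @ v) = mmul (ev f u) (ev f v)"
  by (induction u) (simp_all add: mmul_assoc)

lemma pres_eq_ev:
  assumes "pres_eq R u v" and "\<And>r. r \<in> R \<Longrightarrow> ev f r = mI" and "\<And>a. mdet (f a) = 1"
  shows "ev f u = ev f v"
  using assms(1)
proof induction
  case (cancel u a b v)
  have "mmul (lev f (a, b)) (lev f (a, \<not> b)) = mI"
    using assms(3) by (cases b) (simp_all add: lev_def minv_r minv_l)
  then show ?case by (simp flip: mmul_assoc)
next
  case (relator r u v)
  then show ?case using assms(2) by simp
qed simp_all

definition cnt :: "'b \<Rightarrow> 'b word \<Rightarrow> int" where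
  "cnt g w = sum_list (map (\<lambda>x. if fst x = g then (if snd x then 1 else -1) else 0) w)"

lemma pres_eq_cnt:
  assumes "pres_eq R u v" and "\<And>r. r \<in> R \<Longrightarrow> cnt g r = 0"
  shows "cnt g u = cnt g v"
  using assms(1)
  by induction (auto simp: cnt_def assms(2)[unfolded cnt_def])

definition mB :: m2 where "mB = M 0 1 (-1) 0"

definition sdx :: "nat \<Rightarrow> nat \<Rightarrow> int" where
  "sdx m l = (if l = 1 then 1 else int m - 1 - int l)"
definition sdy :: "nat \<Rightarrow> int" where
  "sdy l = (if l = 1 then 0 else 1)"

fun fimg :: "nat \<Rightarrow> 't gen \<Rightarrow> m2" where
  "fimg m (Sg l) = (if 1 \<le> l \<and> l < m then upow (sdx m l) (sdy l) 1 else if l = m then mB else mI)"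
| "fimg m _ = mI"

lemma fimg_det: "mdet (fimg m g) = 1"
  by (cases g) (simp_all add: upow_det mB_def mI_def)

lemma fimg_r[simp]: "mmul (fimg m g) (minv (fimg m g)) = mI" by (rule minv_r[OF fimg_det])
lemma fimg_l[simp]: "mmul (minv (fimg m g)) (fimg m g) = mI" by (rule minv_l[OF fimg_det])

lemma conj_step: "mmul (minv (upow c 1 1)) (mmul (upow 1 0 1) (upow c 1 1)) = upow (c+1) 1 1"
  by (simp add: upow_def power2_eq_square algebra_simps)

lemma conj_last: "mmul (minv mB) (mmul (upow 1 0 1) mB) = upow 0 1 1"
  by (simp add: upow_def mB_def)


lemma ev_mapH: "ev (fimg m) (map_word Hg w) = mI"
  by (induction w) (auto simp: map_word_def lev_def mI_def)

lemma cnt_mapH: "cnt (Sg m) (map_word Hg w) = 0"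
  by (induction w) (auto simp: map_word_def cnt_def)

lemma minvI[simp]: "minv mI = mI" by (simp add: mI_def)

lemma rel_ev:
  fixes RH :: "'t word set"
  assumes "r \<in> G_rels RH d p m" and "3 \<le> m"
  shows "ev (fimg m) r = mI"
proof -
  have A: "mmul (fimg m (Sg 1 :: 't gen)) (minv (fimg m (Sg 1 :: 't gen))) = mI"
    using minv_r[OF fimg_det[of m "Sg 1 :: 't gen"]] .
  have L: "mmul (minv (fimg m (Sg l :: 't gen))) (mmul (fimg m (Sg 1 :: 't gen))
     (mmul (fimg m (Sg l :: 't gen)) (minv (fimg m (Sg (l - 1) :: 't gen))))) = mI"
    if "3 \<le> l" "l \<le> m" for l
  proof (cases "l = m")
    case True
    have "m - 1 \<noteq> 1" "sdx m (m - 1) = 0" "sdy (m-1) = 1" using assms(2) by (auto simp: sdx_def sdy_def)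
    then have "fimg m (Sg (m - 1)) = upow 0 1 1" using assms(2) by auto
    moreover have "fimg m (Sg 1) = upow 1 0 1" using assms(2) by (simp add: sdx_def sdy_def)
    moreover have "fimg m (Sg m) = mB" by simp
    ultimately show ?thesis using True conj_last
      by (simp add: mmul_assoc[symmetric] minv_r upow_det)
  next
    case False
    define c where "c = int m - 1 - int l"
    have "fimg m (Sg l) = upow c 1 1" using that False by (simp add: c_def sdx_def sdy_def)
    moreover have "fimg m (Sg (l - 1) :: 't gen) = upow (c+1) 1 1"
    proof -
      have h: "l - 1 \<noteq> 1" "1 \<le> l - 1" "l - 1 < m" "int (l - 1) = int l - 1" using that by auto
      show ?thesis unfolding fimg.simps using h by (simp add: c_def sdx_def sdy_def)
    qed
    moreover have "fimg m (Sg 1) = upow 1 0 1" using assms(2) by (simp add: sdx_def sdy_def)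
    ultimately show ?thesis using conj_step[of c]
      by (simp add: mmul_assoc[symmetric] minv_r upow_det)
  qed
  show ?thesis using assms(1) unfolding G_rels_def
    apply (elim UnE)
    apply (auto simp: ev_mapH commrel_def eqrel_def inv_word_def lev_def
        simp del: fimg.simps(1) simp: L[simplified])
    done
qed

lemma rel_cnt:
  fixes RH :: "'t word set"
  assumes "r \<in> G_rels RH d p m" and "3 \<le> m"
  shows "cnt (Sg m) r = 0"
  using assms unfolding G_rels_def
  by (elim UnE) (auto simp: cnt_mapH[unfolded cnt_def] commrel_def eqrel_def inv_word_def cnt_def)


lemma ev_rep_T: "f a = upow x y 1 \<Longrightarrow> ev f (replicate k (a, True)) = upow x y (int k)"
  by (induction k) (simp_all add: upow0 lev_def upow_add add.commute)

lemma ev_rep_F: "f a = upow x y 1 \<Longrightarrow> ev f (replicate k (a, False)) = upow x y (- int k)"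
  by (induction k) (simp_all add: upow0 lev_def upow_add upow_minv)

lemma ev_wpow: "f a = upow x y 1 \<Longrightarrow> ev f (wpow a n) = upow x y n"
  by (simp add: wpow_def ev_rep_T ev_rep_F)

lemma wpow_0: "wpow a 0 = []" by (simp add: wpow_def)

lemma cnt_rep: "cnt g (replicate k (a, b)) = (if a = g then (if b then int k else - int k) else 0)"
  by (induction k) (auto simp: cnt_def)

lemma cnt_wpow: "cnt g (wpow a n) = (if a = g then n else 0)"
  by (simp add: wpow_def cnt_rep)

lemma cnt_append: "cnt g (u @ v) = cnt g u + cnt g v"
  by (simp add: cnt_def)

lemma fimg_S: "1 \<le> l \<Longrightarrow> l < m \<Longrightarrow> fimg m (Sg l) = upow (sdx m l) (sdy l) 1"
  by simp

lemma sd_indep: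
  assumes "1 \<le> a" "a < b"
  shows "sdx m a * sdy b - sdy a * sdx m b \<noteq> 0"
  using assms by (auto simp: sdx_def sdy_def)

theorem lemma3p5:
  fixes RH :: "('t::finite) word set" and d :: "nat \<Rightarrow> 't" and p m i j k :: nat
    and p' q r :: int
  assumes "finite RH"
    and "inj_on d {1..p}"
    and "\<And>w. set (map fst w) \<subseteq> {1..p} \<Longrightarrow> reduced w \<Longrightarrow> w \<noteq> []
           \<Longrightarrow> \<not> pres_eq RH (map_word d w) []"
    and "1 \<le> i" "i < j" "j < k" "k \<le> m"
    and "pres_eq (G_rels RH d p m) (wpow (Sg i) p' @ wpow (Sg j) q @ wpow (Sg k) r) []"
  shows "p' = 0 \<and> q = 0 \<and> r = 0"
proof -
  have m3: "3 \<le> m" using assms(4-7) by linarith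
  let ?w = "(wpow (Sg i) p' @ wpow (Sg j) q @ wpow (Sg k) r) :: 't gen word"
  have E: "ev (fimg m) ?w = mI"
    using pres_eq_ev[OF assms(8) rel_ev[where RH=RH and d=d and p=p, OF _ m3] fimg_det] by simp
  have C: "cnt (Sg m) ?w = 0"
    using pres_eq_cnt[OF assms(8) rel_cnt[where RH=RH and d=d and p=p, OF _ m3]] by (simp add: cnt_def)
  have Ei: "ev (fimg m) (wpow (Sg i :: 't gen) p') = upow (sdx m i) (sdy i) p'"
    using assms(4-7) by (intro ev_wpow fimg_S) auto
  have Ej: "ev (fimg m) (wpow (Sg j :: 't gen) q) = upow (sdx m j) (sdy j) q"
    using assms(4-7) by (intro ev_wpow fimg_S) auto
  show ?thesis
  proof (cases "k = m")
    case True
    have "i \<noteq> m" "j \<noteq> m" using assms(4-7) by auto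
    then have r: "r = 0" using C True by (simp add: cnt_append cnt_wpow)
    have "mmul (upow (sdx m i) (sdy i) p') (upow (sdx m j) (sdy j) q) = mI"
      using E Ei Ej r by (simp add: wpow_0)
    from two_dir'[OF this sd_indep[OF assms(4,5)]] r show ?thesis by simp
  next
    case False
    have Ek: "ev (fimg m) (wpow (Sg k :: 't gen) r) = upow (sdx m k) (sdy k) r"
      using assms(4-7) False by (intro ev_wpow fimg_S) auto
    have "mmul (mmul (upow (sdx m i) (sdy i) p') (upow (sdx m j) (sdy j) q)) (upow (sdx m k) (sdy k) r) = mI"
      using E Ei Ej Ek by (simp add: mmul_assoc)
    from three_dir[OF this sd_indep sd_indep sd_indep] assms(4-6) show ?thesis by simp
  qed
qed

end
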